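(* Let $(A,B,C,D)$ be reduced words in $a^{\pm1},b^{\pm1}$ defining a local $\mathrm{Aut}(F_3)$ braid representation. Let $x,\mathbf{C},\mathbf{D}$ be formal letters and write the word $C(B(x,\mathbf{C}),\mathbf{D})$, reduced over the alphabet $\{x^{\pm1},\mathbf{C}^{\pm1},\mathbf{D}^{\pm1}\}$, in the form $$W_0(\mathbf{C},\mathbf{D})\,x^{n_1}\,W_1(\mathbf{C},\mathbf{D})\,x^{n_2}\cdots x^{n_k}\,W_k(\mathbf{C},\mathbf{D}),$$ where $W_0,W_k$ are reduced (possibly empty) words in $\mathbf{C}^{\pm1},\mathbf{D}^{\pm1}$, $W_1,\dots,W_{k-1}$ are nonempty reduced words in $\mathbf{C}^{\pm1},\mathbf{D}^{\pm1}$, and $n_1,\dots,n_k$ are nonzero integers. Let $W_i$ also denote the word $W_i(C(y,z),D(y,z))$ in $y^{\pm1},z^{\pm1}$. Then, as words, $$\mathrm{red}\big(C(B(x,C(y,z)),D(y,z))\big)\equiv \mathrm{red}(W_0)\,x^{n_1}\,\mathrm{red}(W_1)\,x^{n_2}\cdots x^{n_k}\,\mathrm{red}(W_k).$$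
   Context: $F_2$ is free on $a,b$; $F_3$ is free on $x_1,x_2,x_3$ (here also written $x,y,z$). For a word $W$ in $a^{\pm1},b^{\pm1}$, $W(U,V)$ denotes the word obtained by substituting the word $U$ for $a$ and $V$ for $b$ (and $U^{-1},V^{-1}$ for $a^{-1},b^{-1}$). $\mathrm{red}(W)$ is the unique reduced word obtained from $W$ by cancelling subwords $ss^{-1}$, $s^{-1}s$; $\equiv$ denotes equality as words. A quadruple $(A,B,C,D)$ of reduced words defines a local $\mathrm{Aut}(F_3)$ braid representation if $\tau:a\mapsto A,b\mapsto B$ and $\kappa:a\mapsto C,b\mapsto D$ are automorphisms of $F_2$ and the automorphisms $s_1: x_1\mapsto A(x_1,x_2),\ x_2\mapsto B(x_1,x_2),\ x_3\mapsto x_3$ and $s_2: x_1\mapsto x_1,\ x_2\mapsto C(x_2,x_3),\ x_3\mapsto D(x_2,x_3)$ of $F_3$ satisfy $s_1s_2s_1=s_2s_1s_2$. *)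

theory Defs
  imports Main
begin

text \<open>Words in a free group: a letter is a generator with a sign
  (True = the generator itself, False = its inverse).\<close>

type_synonym 'g word = "('g \<times> bool) list"

definition inv_letter :: "'g \<times> bool \<Rightarrow> 'g \<times> bool" where
  "inv_letter l = (fst l, \<not> snd l)"

definition inv_word :: "'g word \<Rightarrow> 'g word" where
  "inv_word w = rev (map inv_letter w)"

definition reduced :: "'g word \<Rightarrow> bool" where
  "reduced w \<longleftrightarrow> (\<forall>i. Suc i < length w \<longrightarrow> w ! Suc i \<noteq> inv_letter (w ! i))"

fun red :: "'g word \<Rightarrow> 'g word" where
  "red [] = []"
| "red (l # w) = (case red w of
      [] \<Rightarrow> [l]
    | m # ms \<Rightarrow> (if m = inv_letter l then ms else l # m # ms))"

definition subst :: "('g \<Rightarrow> 'h word) \<Rightarrow> 'g word \<Rightarrow> 'h word" where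
  "subst f w = concat (map (\<lambda>l. if snd l then f (fst l) else inv_word (f (fst l))) w)"

datatype gen2 = ga | gb
datatype gen3 = X1 | X2 | X3
datatype lam = LX | LC | LD   \<comment> \<open>the formal letters x, bold C, bold D\<close>

definition lt :: "'g \<Rightarrow> 'g word" where "lt g = [(g, True)]"

text \<open>W(U,V): substitute U for a and V for b.\<close>
definition sub2 :: "'h word \<Rightarrow> 'h word \<Rightarrow> gen2 word \<Rightarrow> 'h word" where
  "sub2 U V w = subst (\<lambda>g. case g of ga \<Rightarrow> U | gb \<Rightarrow> V) w"

definition is_aut2 :: "gen2 word \<Rightarrow> gen2 word \<Rightarrow> bool" where
  "is_aut2 A B \<longleftrightarrow> bij_betw (\<lambda>w. red (sub2 A B w)) {w. reduced w} {w. reduced w}"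

definition s1_map :: "gen2 word \<Rightarrow> gen2 word \<Rightarrow> gen3 word \<Rightarrow> gen3 word" where
  "s1_map A B w = subst (\<lambda>g. case g of
       X1 \<Rightarrow> sub2 (lt X1) (lt X2) A | X2 \<Rightarrow> sub2 (lt X1) (lt X2) B | X3 \<Rightarrow> lt X3) w"

definition s2_map :: "gen2 word \<Rightarrow> gen2 word \<Rightarrow> gen3 word \<Rightarrow> gen3 word" where
  "s2_map C D w = subst (\<lambda>g. case g of
       X1 \<Rightarrow> lt X1 | X2 \<Rightarrow> sub2 (lt X2) (lt X3) C | X3 \<Rightarrow> sub2 (lt X2) (lt X3) D) w"

definition local_braid_rep :: "gen2 word \<Rightarrow> gen2 word \<Rightarrow> gen2 word \<Rightarrow> gen2 word \<Rightarrow> bool" where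
  "local_braid_rep A B C D \<longleftrightarrow>
     reduced A \<and> reduced B \<and> reduced C \<and> reduced D \<and>
     is_aut2 A B \<and> is_aut2 C D \<and>
     (\<forall>w. red (s1_map A B (s2_map C D (s1_map A B w)))
         = red (s2_map C D (s1_map A B (s2_map C D w))))"

definition xpow :: "'g \<Rightarrow> int \<Rightarrow> 'g word" where
  "xpow g n = replicate (nat \<bar>n\<bar>) (g, n > 0)"

fun assemble :: "'g \<Rightarrow> 'g word list \<Rightarrow> int list \<Rightarrow> 'g word" where
  "assemble g [] ns = []"
| "assemble g [w] ns = w"
| "assemble g (w # ws) [] = w"
| "assemble g (w # ws) (n # ns) = w @ xpow g n @ assemble g ws ns"

end

theory Submission
  imports Defs
begin

lemma inv_inv[simp]: "inv_letter (inv_letter l) = l"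
  by (simp add: inv_letter_def)

lemma fst_inv[simp]: "fst (inv_letter l) = fst l"
  by (simp add: inv_letter_def)

lemma reduced_Nil[simp]: "reduced []"
  by (simp add: reduced_def)

lemma reduced_Cons: "reduced (l # w) \<longleftrightarrow> reduced w \<and> (w = [] \<or> hd w \<noteq> inv_letter l)"
proof (cases w)
  case Nil then show ?thesis by (simp add: reduced_def)
next
  case (Cons m ms)
  have "reduced (l # m # ms) \<longleftrightarrow> (m \<noteq> inv_letter l \<and> reduced (m # ms))"
    unfolding reduced_def
  proof (intro iffI conjI allI impI)
    assume H: "\<forall>i. Suc i < length (l # m # ms) \<longrightarrow> (l # m # ms) ! Suc i \<noteq> inv_letter ((l # m # ms) ! i)"
    show "m \<noteq> inv_letter l" using H[rule_format, of 0] by simp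
    fix i assume "Suc i < length (m # ms)"
    then show "(m # ms) ! Suc i \<noteq> inv_letter ((m # ms) ! i)" using H[rule_format, of "Suc i"] by simp
  next
    fix i assume H: "m \<noteq> inv_letter l \<and> (\<forall>i. Suc i < length (m # ms) \<longrightarrow> (m # ms) ! Suc i \<noteq> inv_letter ((m # ms) ! i))"
      and i: "Suc i < length (l # m # ms)"
    show "(l # m # ms) ! Suc i \<noteq> inv_letter ((l # m # ms) ! i)"
    proof (cases i)
      case 0 then show ?thesis using H by simp
    next
      case (Suc j) then show ?thesis using H i by auto
    qed
  qed
  then show ?thesis using Cons by auto
qed

lemma red_reduced: "reduced (red w)"
proof (induction w)
  case Nil then show ?case by simp
next
  case (Cons l w)
  show ?case
  proof (cases "red w")
    case Nil then show ?thesis by (simp add: reduced_Cons)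
  next
    case (Cons m ms)
    then show ?thesis using Cons.IH by (auto simp: reduced_Cons)
  qed
qed

lemma reduced_red: "reduced w \<Longrightarrow> red w = w"
proof (induction w)
  case Nil then show ?case by simp
next
  case (Cons l w)
  then have r: "red w = w" by (simp add: reduced_Cons)
  show ?case
  proof (cases w)
    case Nil then show ?thesis by simp
  next
    case (Cons m ms)
    then show ?thesis using r Cons.prems by (auto simp: reduced_Cons)
  qed
qed

lemma red_red[simp]: "red (red w) = red w"
  by (simp add: reduced_red red_reduced)

lemma red_Cons_red: "red (l # w) = red (l # red w)"
  by simp

lemma red_cancel: "red (l # inv_letter l # s) = red s"
proof -
  have r: "reduced (red s)" by (rule red_reduced)
  show ?thesis
  proof (cases "red s")
    case Nil then show ?thesis by simp
  next
    case (Cons m ms)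
    show ?thesis
    proof (cases "m = l")
      case True
      then have "ms = [] \<or> hd ms \<noteq> inv_letter l" using r Cons by (simp add: reduced_Cons)
      moreover have "red ms = ms" using r Cons by (simp add: reduced_Cons reduced_red)
      ultimately show ?thesis using Cons True by (cases ms) auto
    next
      case False then show ?thesis using Cons by simp
    qed
  qed
qed

lemma red_app_left: "red (u @ v) = red (red u @ v)"
proof (induction u)
  case Nil then show ?case by simp
next
  case (Cons l u)
  have "red ((l # u) @ v) = red (l # red (u @ v))" by simp
  also have "\<dots> = red (l # (red u @ v))" using Cons.IH by (metis red_Cons_red)
  also have "\<dots> = red (red (l # u) @ v)"
  proof (cases "red u")
    case Nil then show ?thesis by simp
  next
    case (Cons m ms)
    show ?thesis
    proof (cases "m = inv_letter l")
      case True
      have "red (l # u) = ms" using Cons True by simp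
      moreover have "red (l # (red u @ v)) = red (ms @ v)"
        using Cons True red_cancel[of l "ms @ v"] by simp
      ultimately show ?thesis by simp
    next
      case False then show ?thesis using Cons by simp
    qed
  qed
  finally show ?case .
qed

lemma red_app_right: "red (u @ v) = red (u @ red v)"
proof (induction u)
  case Nil then show ?case by simp
next
  case (Cons l u)
  have "red ((l # u) @ v) = red (l # red (u @ v))" by simp
  also have "\<dots> = red (l # red (u @ red v))" using Cons.IH by simp
  also have "\<dots> = red ((l # u) @ red v)" by simp
  finally show ?case .
qed

lemma inv_word_Nil[simp]: "inv_word [] = []" by (simp add: inv_word_def)
lemma inv_word_Cons: "inv_word (l # w) = inv_word w @ [inv_letter l]" by (simp add: inv_word_def)
lemma inv_word_append: "inv_word (u @ v) = inv_word v @ inv_word u" by (simp add: inv_word_def)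
lemma inv_word_inv_word[simp]: "inv_word (inv_word w) = w"
  by (simp add: inv_word_def rev_map comp_def)

lemma red_w_inv: "red (w @ inv_word w) = []"
proof (induction w)
  case Nil then show ?case by simp
next
  case (Cons l w)
  have "red ((l # w) @ inv_word (l # w)) = red (l # red ((w @ inv_word w) @ [inv_letter l]))"
    by (simp add: inv_word_Cons)
  also have "\<dots> = red (l # red (red (w @ inv_word w) @ [inv_letter l]))"
    by (metis red_app_left)
  also have "\<dots> = []" using Cons.IH by (metis append.left_neutral red_Cons_red red_cancel red.simps(1))
  finally show ?case .
qed

lemma subst_Nil[simp]: "subst f [] = []" by (simp add: subst_def)
lemma subst_append: "subst f (u @ v) = subst f u @ subst f v" by (simp add: subst_def)
lemma subst_Cons: "subst f (l # w) = subst f [l] @ subst f w" by (simp add: subst_def)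
lemma subst_single: "subst f [l] = (if snd l then f (fst l) else inv_word (f (fst l)))"
  by (simp add: subst_def)

lemma subst_inv_word: "subst f (inv_word w) = inv_word (subst f w)"
proof (induction w)
  case Nil then show ?case by simp
next
  case (Cons l w)
  have "subst f [inv_letter l] = inv_word (subst f [l])"
    by (simp add: subst_single inv_letter_def)
  then show ?case using Cons.IH
    by (simp add: inv_word_Cons subst_append inv_word_append subst_Cons[of f l w])
qed

lemma subst_subst: "subst f (subst g w) = subst (\<lambda>x. subst f (g x)) w"
proof (induction w)
  case Nil then show ?case by simp
next
  case (Cons l w)
  then show ?case
    by (simp add: subst_Cons[of _ l w] subst_append subst_single subst_inv_word)
qed

lemma subst_lt: "subst f (lt g) = f g" by (simp add: lt_def subst_def)

lemma subst_lt_id: "subst lt w = w"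
  by (induction w) (auto simp: subst_def lt_def inv_word_def inv_letter_def)

lemma red_subst: "red (subst f w) = red (subst f (red w))"
proof (induction w)
  case Nil then show ?case by simp
next
  case (Cons l w)
  have "red (subst f (l # w)) = red (subst f [l] @ red (subst f w))"
    by (metis subst_Cons red_app_right)
  also have "\<dots> = red (subst f (l # red w))"
    using Cons.IH by (metis subst_Cons red_app_right)
  also have "\<dots> = red (subst f (red (l # w)))"
  proof (cases "red w")
    case Nil then show ?thesis by simp
  next
    case (Cons m ms)
    show ?thesis
    proof (cases "m = inv_letter l")
      case True
      have inv: "subst f [inv_letter l] = inv_word (subst f [l])"
        by (simp add: subst_single inv_letter_def)
      have "red (subst f (l # inv_letter l # ms))
          = red ((subst f [l] @ inv_word (subst f [l])) @ subst f ms)"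
        by (metis subst_Cons inv append_assoc)
      also have "\<dots> = red (subst f ms)" by (metis red_app_left red_w_inv append.left_neutral red_red)
      finally show ?thesis using Cons True by simp
    next
      case False then show ?thesis using Cons by simp
    qed
  qed
  finally show ?case .
qed

lemma assemble_subst:
  "f g = lt g' \<Longrightarrow> subst f (assemble g ws ns) = assemble g' (map (subst f) ws) ns"
proof (induction g ws ns rule: assemble.induct)
  case (4 g w v vs n ns)
  have "\<And>k b. subst f (replicate k (g, b)) = replicate k (g', b)"
  proof -
    fix k b show "subst f (replicate k (g, b)) = replicate k (g', b)"
      by (induction k) (auto simp: subst_def 4(2) lt_def
          inv_word_def inv_letter_def)
  qed
  then have "subst f (xpow g n) = xpow g' n" by (simp add: xpow_def)
  then show ?case using 4 by (simp add: subst_append del: assemble.simps(2,3))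
qed auto

lemma red_assemble: "red (assemble g ws ns) = red (assemble g (map red ws) ns)"
proof (induction g ws ns rule: assemble.induct)
  case (4 g w v vs n ns)
  let ?X = "xpow g n"
  have "red (assemble g (w # v # vs) (n # ns)) = red (red w @ red (?X @ red (assemble g (v # vs) ns)))"
    by (simp, metis red_app_left red_app_right)
  also have "\<dots> = red (red w @ red (?X @ red (assemble g (map red (v # vs)) ns)))"
    using 4 by simp
  also have "\<dots> = red (assemble g (map red (w # v # vs)) (n # ns))"
    by (simp, metis red_app_left red_app_right red_red)
  finally show ?case .
qed auto

lemma reduced_append:
  "reduced (u @ v) \<longleftrightarrow> reduced u \<and> reduced v \<and> (u = [] \<or> v = [] \<or> hd v \<noteq> inv_letter (last u))"
proof (induction u)
  case Nil then show ?case by simp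
next
  case (Cons l u)
  then show ?case by (cases u) (auto simp: reduced_Cons)
qed

lemma reduced_replicate: "reduced (replicate k (g, b))"
  by (induction k) (auto simp: reduced_Cons inv_letter_def)

lemma assemble_prefix: "\<exists>t. assemble g (w # ws) ns = w @ t"
  by (cases ws; cases ns) auto

lemma assemble_reduced:
  "\<lbrakk>length ws = Suc (length ns); \<forall>w\<in>set ws. reduced w \<and> (\<forall>l\<in>set w. fst l \<noteq> g);
    \<forall>i. 0 < i \<and> i < length ns \<longrightarrow> ws ! i \<noteq> []; \<forall>n\<in>set ns. n \<noteq> 0\<rbrakk>
   \<Longrightarrow> reduced (assemble g ws ns)"
proof (induction ns arbitrary: ws)
  case Nil
  then obtain w where "ws = [w]" by (cases ws) auto
  then show ?case using Nil by simp
next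
  case (Cons n ns)
  then obtain w w' ws' where ws: "ws = w # w' # ws'" by (cases ws; cases "tl ws") auto
  let ?R = "assemble g (w' # ws') ns"
  have IH: "reduced ?R"
  proof (rule Cons.IH)
    show "length (w' # ws') = Suc (length ns)" using Cons.prems ws by simp
    show "\<forall>w\<in>set (w' # ws'). reduced w \<and> (\<forall>l\<in>set w. fst l \<noteq> g)" using Cons.prems ws by simp
    show "\<forall>n\<in>set ns. n \<noteq> 0" using Cons.prems by simp
    show "\<forall>i. 0 < i \<and> i < length ns \<longrightarrow> (w' # ws') ! i \<noteq> []"
    proof (intro allI impI)
      fix i assume "0 < i \<and> i < length ns"
      then show "(w' # ws') ! i \<noteq> []" using Cons.prems(3)[rule_format, of "Suc i"] ws by simp
    qed
  qed
  have Rhd: "?R = [] \<or> fst (hd ?R) \<noteq> g"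
  proof (cases "w' = []")
    case True
    then have "ns = []" using Cons.prems(3)[rule_format, of 1] ws by auto
    then show ?thesis using True by (cases ws') auto
  next
    case False
    obtain t where "?R = w' @ t" using assemble_prefix[of g w' ws' ns] by blast
    then show ?thesis using False Cons.prems(2) ws by (cases w') auto
  qed
  have n0: "n \<noteq> 0" using Cons.prems by simp
  define X where "X = xpow g n"
  have Xne: "X \<noteq> []" using n0 by (simp add: X_def xpow_def)
  have Xred: "reduced X" by (simp add: X_def xpow_def reduced_replicate)
  have Xg: "\<forall>l\<in>set X. fst l = g" by (simp add: X_def xpow_def)
  have wprop: "reduced w" "\<forall>l\<in>set w. fst l \<noteq> g" using Cons.prems(2) ws by auto
  have "reduced (X @ ?R)"
    using Xred IH Rhd Xne Xg by (auto simp: reduced_append)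
  moreover have "w = [] \<or> hd (X @ ?R) \<noteq> inv_letter (last w)"
  proof (cases "w = []")
    case False
    have "hd (X @ ?R) = hd X" using Xne by simp
    moreover have "fst (hd X) = g" using Xne Xg by simp
    moreover have "fst (last w) \<noteq> g" using False wprop(2) by simp
    ultimately show ?thesis by (metis fst_inv)
  qed simp
  ultimately have "reduced (w @ X @ ?R)" using wprop by (auto simp: reduced_append)
  then show ?case using ws by (simp add: X_def)
qed

lemma nonempty:
  assumes aut: "is_aut2 C D" and W: "reduced W" "W \<noteq> []"
  shows "red (sub2 (sub2 (lt X2) (lt X3) C) (sub2 (lt X2) (lt X3) D) W) \<noteq> []"
proof
  define \<psi> where "\<psi> = (\<lambda>g. case g of ga \<Rightarrow> lt X2 | gb \<Rightarrow> lt X3)"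
  define \<psi>i where "\<psi>i = (\<lambda>x. case x of X1 \<Rightarrow> lt ga | X2 \<Rightarrow> lt ga | X3 \<Rightarrow> lt gb)"
  have e1: "sub2 (sub2 (lt X2) (lt X3) C) (sub2 (lt X2) (lt X3) D) W = subst \<psi> (sub2 C D W)"
    unfolding sub2_def subst_subst \<psi>_def
    by (rule arg_cong[where f="\<lambda>f. subst f W"]) (auto split: gen2.split)
  have inv: "subst \<psi>i (subst \<psi> w) = w" for w
  proof -
    have "(\<lambda>x. subst \<psi>i (\<psi> x)) = lt"
      by (rule ext) (auto simp: \<psi>_def \<psi>i_def subst_lt split: gen2.split)
    then show ?thesis by (simp add: subst_subst subst_lt_id)
  qed
  assume H: "red (sub2 (sub2 (lt X2) (lt X3) C) (sub2 (lt X2) (lt X3) D) W) = []"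
  let ?r = "red (sub2 C D W)"
  have "?r \<noteq> []"
  proof
    assume "?r = []"
    moreover have "red (sub2 C D []) = []" by (simp add: sub2_def)
    moreover have "inj_on (\<lambda>w. red (sub2 C D w)) {w. reduced w}"
      using aut by (simp add: is_aut2_def bij_betw_def)
    ultimately have "W = []" using W(1) by (auto dest: inj_onD[of _ _ W "[]"])
    then show False using W(2) by simp
  qed
  moreover have "red (subst \<psi> ?r) = []" using H e1 red_subst by metis
  then have "?r = []"
    by (metis inv red_red red_subst subst_Nil red.simps(1))
  ultimately show False by simp
qed

lemma subst_avoid:
  "(\<And>g. \<forall>l\<in>set (f g). fst l \<noteq> x) \<Longrightarrow> \<forall>l\<in>set (subst f w). fst l \<noteq> x"
proof -
  assume H: "\<And>g. \<forall>l\<in>set (f g). fst l \<noteq> x"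
  show ?thesis
  proof
    fix l assume "l \<in> set (subst f w)"
    then obtain m where "m \<in> set w" and l: "l \<in> set (if snd m then f (fst m) else inv_word (f (fst m)))"
      by (auto simp: subst_def)
    then show "fst l \<noteq> x" using H[of "fst m"]
      by (auto simp: inv_word_def inv_letter_def split: if_splits)
  qed
qed

theorem lemma3p1:
  fixes A B C D :: "gen2 word"
    and Ws :: "gen2 word list" and ns :: "int list"
  assumes rep: "local_braid_rep A B C D"
    and len: "length Ws = Suc (length ns)"
    and Wred: "\<forall>W\<in>set Ws. reduced W"
    and Wne: "\<forall>i. 0 < i \<and> i < length ns \<longrightarrow> Ws ! i \<noteq> []"
    and nz: "\<forall>n\<in>set ns. n \<noteq> 0"
    and decomp: "red (sub2 (sub2 (lt LX) (lt LC) B) (lt LD) C)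
                   = assemble LX (map (sub2 (lt LC) (lt LD)) Ws) ns"
  shows "red (sub2 (sub2 (lt X1) (sub2 (lt X2) (lt X3) C) B) (sub2 (lt X2) (lt X3) D) C)
           = assemble X1 (map (\<lambda>W. red (sub2 (sub2 (lt X2) (lt X3) C) (sub2 (lt X2) (lt X3) D) W)) Ws) ns"
proof -
  define Cw where "Cw = sub2 (lt X2) (lt X3) C"
  define Dw where "Dw = sub2 (lt X2) (lt X3) D"
  define \<phi> where "\<phi> = (\<lambda>l. case l of LX \<Rightarrow> lt X1 | LC \<Rightarrow> Cw | LD \<Rightarrow> Dw)"
  have aut: "is_aut2 C D" using rep by (simp add: local_braid_rep_def)
  have t1: "subst \<phi> (sub2 (lt LC) (lt LD) W) = sub2 Cw Dw W" for W
    unfolding sub2_def subst_subst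
    by (rule arg_cong[where f="\<lambda>f. subst f W"]) (auto simp: subst_lt \<phi>_def split: gen2.split)
  have t2: "subst \<phi> (sub2 (lt LX) (lt LC) B) = sub2 (lt X1) Cw B"
    unfolding sub2_def subst_subst
    by (rule arg_cong[where f="\<lambda>f. subst f B"]) (auto simp: subst_lt \<phi>_def split: gen2.split)
  have phiD: "\<phi> LD = Dw" by (simp add: \<phi>_def)
  have t3: "subst \<phi> (sub2 (sub2 (lt LX) (lt LC) B) (lt LD) C) = sub2 (sub2 (lt X1) Cw B) Dw C"
    unfolding sub2_def[of "sub2 (lt LX) (lt LC) B"] sub2_def[of "sub2 (lt X1) Cw B"] subst_subst
    by (rule arg_cong[where f="\<lambda>f. subst f C"], rule ext) (auto simp: subst_lt t2 phiD split: gen2.split)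
  have "red (sub2 (sub2 (lt X1) Cw B) Dw C)
      = red (subst \<phi> (assemble LX (map (sub2 (lt LC) (lt LD)) Ws) ns))"
    using red_subst decomp t3 by metis
  also have "\<dots> = red (assemble X1 (map (sub2 Cw Dw) Ws) ns)"
    by (subst assemble_subst[where g'=X1], simp add: \<phi>_def) (simp add: t1 comp_def)
  also have "\<dots> = red (assemble X1 (map (\<lambda>W. red (sub2 Cw Dw W)) Ws) ns)"
    by (subst red_assemble) (simp add: comp_def)
  also have "\<dots> = assemble X1 (map (\<lambda>W. red (sub2 Cw Dw W)) Ws) ns"
  proof (rule reduced_red, rule assemble_reduced)
    show "length (map (\<lambda>W. red (sub2 Cw Dw W)) Ws) = Suc (length ns)" using len by simp
    show "\<forall>n\<in>set ns. n \<noteq> 0" using nz .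
    show "\<forall>i. 0 < i \<and> i < length ns \<longrightarrow> map (\<lambda>W. red (sub2 Cw Dw W)) Ws ! i \<noteq> []"
    proof (intro allI impI)
      fix i assume i: "0 < i \<and> i < length ns"
      then have "Ws ! i \<in> set Ws" using len by simp
      then show "map (\<lambda>W. red (sub2 Cw Dw W)) Ws ! i \<noteq> []"
        using i len Wne Wred nonempty[OF aut, of "Ws ! i"] by (simp add: Cw_def Dw_def)
    qed
    show "\<forall>w\<in>set (map (\<lambda>W. red (sub2 Cw Dw W)) Ws). reduced w \<and> (\<forall>l\<in>set w. fst l \<noteq> X1)"
    proof
      fix w assume "w \<in> set (map (\<lambda>W. red (sub2 Cw Dw W)) Ws)"
      then obtain W where w: "w = red (sub2 Cw Dw W)" by auto
      have "\<forall>l\<in>set (sub2 Cw Dw W). fst l \<noteq> X1"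
        unfolding sub2_def Cw_def Dw_def
      proof (rule subst_avoid)
        have aux: "\<forall>l\<in>set (case g of ga \<Rightarrow> lt X2 | gb \<Rightarrow> lt X3). fst l \<noteq> X1" for g
          by (cases g) (simp_all add: lt_def)
        fix g
        show "\<forall>l\<in>set (case g of ga \<Rightarrow> subst (\<lambda>g. case g of ga \<Rightarrow> lt X2 | gb \<Rightarrow> lt X3) C
                 | gb \<Rightarrow> subst (\<lambda>g. case g of ga \<Rightarrow> lt X2 | gb \<Rightarrow> lt X3) D). fst l \<noteq> X1"
          by (cases g) (simp_all add: subst_avoid[OF aux])
      qed
      moreover have "set (red u) \<subseteq> set u" for u :: "gen3 word"
      proof (induction u)
        case (Cons l u) then show ?case by (cases "red u") auto
      qed simp
      ultimately show "reduced w \<and> (\<forall>l\<in>set w. fst l \<noteq> X1)"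
        using w red_reduced by blast
    qed
  qed
  finally show ?thesis by (simp add: Cw_def Dw_def)
qed

end
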